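(* Let $P_1,\dots,P_N$ be orthogonal projections on a finite-dimensional complex Hilbert space, and let $\delta\in[0,1]$, $\alpha\in[0,1]$. Suppose that for at least $\delta N^2$ of the ordered pairs $(j,\ell)\in[N]^2$ one has $\|P_jP_\ell\|_{\mathrm{op}}\le\alpha$. Then \[ \left\|\frac1N\sum_{j=1}^NP_j\right\|_{\mathrm{op}}\le1-\frac\delta2(1-\alpha). \]
   Context: $\|\cdot\|_{\mathrm{op}}$ denotes the operator norm; ordered pairs in $[N]^2$ include the diagonal pairs $(j,j)$. *)

theory Defs
  imports "HOL-Analysis.Analysis"
begin

text \<open>A finite-dimensional complex Hilbert space is modelled as \<open>complex ^ 'n\<close>
  (with its standard Euclidean inner product / norm); operators are matrices
  \<open>complex ^ 'n ^ 'n\<close> acting by \<open>*v\<close>.\<close>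

definition cadjoint :: "complex ^ 'n ^ 'm \<Rightarrow> complex ^ 'm ^ 'n" where
  "cadjoint A = (\<chi> i j. cnj (A $ j $ i))"

definition orth_proj :: "complex ^ 'n ^ 'n \<Rightarrow> bool" where
  "orth_proj P \<longleftrightarrow> P ** P = P \<and> cadjoint P = P"

definition opnorm :: "complex ^ 'n ^ 'm \<Rightarrow> real" where
  "opnorm A = onorm (\<lambda>x. A *v x)"

end

theory Submission
  imports Defs
begin

lemma inner_cplx: "inner (a::complex) b = Re (a * cnj b)"
  by (simp add: inner_complex_def)

lemma adj: "inner (A *v x) (y::complex^'m) = inner (x::complex^'n) (cadjoint A *v y)"
proof -
  have "inner (A *v x) y = Re (\<Sum>i\<in>UNIV. \<Sum>j\<in>UNIV. A$i$j * x$j * cnj (y$i))"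
    by (simp add: inner_vec_def inner_cplx matrix_vector_mult_def sum_distrib_right Re_sum)
  also have "\<dots> = Re (\<Sum>j\<in>UNIV. \<Sum>i\<in>UNIV. A$i$j * x$j * cnj (y$i))"
    by (subst sum.swap) simp
  also have "\<dots> = inner x (cadjoint A *v y)"
    by (simp add: inner_vec_def inner_cplx matrix_vector_mult_def cadjoint_def sum_distrib_left Re_sum mult_ac)
  finally show ?thesis .
qed

lemma bl: "bounded_linear (\<lambda>x::complex^'n. (A::complex^'n^'m) *v x)"
  by (rule matrix_vector_mul_bounded_linear)

lemma sv1: "((c::real) *\<^sub>R (M :: complex^'n^'m)) *v x = c *\<^sub>R (M *v x)"
  by (simp add: vec_eq_iff matrix_vector_mult_def scaleR_sum_right)

lemma sv2: "(\<Sum>j\<in>S. (M j :: complex^'n^'m)) *v x = (\<Sum>j\<in>S. M j *v x)"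
  by (induction S rule: infinite_finite_induct)
     (auto simp: matrix_vector_mult_add_rdistrib)

lemma proj_norm_le:
  assumes "orth_proj (P::complex^'n^'n)"
  shows "norm (P *v x) \<le> norm x"
proof -
  have e: "P ** P = P" "cadjoint P = P" using assms by (auto simp: orth_proj_def)
  have "norm (P *v x) ^ 2 = inner (P *v x) (P *v x)" by (simp add: power2_norm_eq_inner)
  also have "\<dots> = inner x (P *v (P *v x))" using adj[of P x "P *v x"] e by simp
  also have "\<dots> = inner x (P *v x)" by (simp add: matrix_vector_mul_assoc e)
  also have "\<dots> \<le> norm x * norm (P *v x)" by (rule norm_cauchy_schwarz)
  finally have h: "norm (P *v x) ^ 2 \<le> norm x * norm (P *v x)" .
  show ?thesis
  proof (cases "norm (P *v x) = 0")
    case True then show ?thesis by simp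
  next
    case False
    then have "norm (P *v x) > 0" by simp
    with h show ?thesis by (simp add: power2_eq_square)
  qed
qed

theorem lemma4p13:
  fixes P :: "nat \<Rightarrow> complex ^ 'n ^ 'n"
    and N :: nat and \<delta> \<alpha> :: real
  assumes proj: "\<And>j. j \<in> {1..N} \<Longrightarrow> orth_proj (P j)"
    and delta: "0 \<le> \<delta>" "\<delta> \<le> 1"
    and alpha: "0 \<le> \<alpha>" "\<alpha> \<le> 1"
    and pairs: "\<delta> * real N ^ 2 \<le>
      real (card {(j, l). j \<in> {1..N} \<and> l \<in> {1..N} \<and> opnorm (P j ** P l) \<le> \<alpha>})"
  shows "opnorm ((1 / real N) *\<^sub>R (\<Sum>j = 1..N. P j))
           \<le> 1 - \<delta> / 2 * (1 - \<alpha>)"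
proof -
  define S where "S = {1..N}"
  define G where "G = {(j, l). j \<in> {1..N} \<and> l \<in> {1..N} \<and> opnorm (P j ** P l) \<le> \<alpha>}"
  define t where "t = \<delta> * (1 - \<alpha>)"
  have t0: "0 \<le> t" and t1: "t \<le> 1" using delta alpha by (auto simp: t_def mult_le_one)
  have GS: "G \<subseteq> S \<times> S" by (auto simp: G_def S_def)
  have finS: "finite S" by (simp add: S_def)
  have cardS: "card S = N" by (simp add: S_def)
  show ?thesis unfolding opnorm_def
  proof (rule onorm_le)
    fix x :: "complex^'n"
    show "norm (((1 / real N) *\<^sub>R (\<Sum>j = 1..N. P j)) *v x) \<le> (1 - \<delta> / 2 * (1 - \<alpha>)) * norm x"
    proof (cases "N = 0")
      case True
      then show ?thesis using t0 t1 by (simp add: t_def)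
    next
      case False
      define y where "y = (\<Sum>j\<in>S. P j *v x)"
      have Ax: "((1 / real N) *\<^sub>R (\<Sum>j = 1..N. P j)) *v x = (1 / real N) *\<^sub>R y"
        by (simp add: sv1 sv2 y_def S_def)
      have bnd: "inner (P j *v x) (P l *v x) \<le> (if (j, l) \<in> G then \<alpha> else 1) * (norm x)^2"
        if "j \<in> S" "l \<in> S" for j l
      proof -
        have pj: "orth_proj (P j)" "orth_proj (P l)" using proj that by (auto simp: S_def)
        have b1: "inner (P j *v x) (P l *v x) \<le> norm x * norm x"
          using norm_cauchy_schwarz[of "P j *v x" "P l *v x"] proj_norm_le[OF pj(1), of x]
            proj_norm_le[OF pj(2), of x]
          by (smt (verit) mult_mono norm_ge_zero)
        show ?thesis
        proof (cases "(j, l) \<in> G")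
          case True
          then have op: "opnorm (P j ** P l) \<le> \<alpha>" by (simp add: G_def)
          have "inner (P j *v x) (P l *v x) = inner x (P j *v (P l *v x))"
            using adj[of "P j" x "P l *v x"] pj by (simp add: orth_proj_def)
          also have "\<dots> = inner x ((P j ** P l) *v x)" by (simp add: matrix_vector_mul_assoc)
          also have "\<dots> \<le> norm x * norm ((P j ** P l) *v x)" by (rule norm_cauchy_schwarz)
          also have "\<dots> \<le> norm x * (opnorm (P j ** P l) * norm x)"
            unfolding opnorm_def by (intro mult_left_mono onorm[OF bl]) simp
          also have "\<dots> \<le> norm x * (\<alpha> * norm x)"
            by (intro mult_left_mono mult_right_mono op) simp_all
          finally show ?thesis using True by (simp add: power2_eq_square mult_ac)
        next
          case False
          then show ?thesis using b1 by (simp add: power2_eq_square)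
        qed
      qed
      have "inner y y = (\<Sum>j\<in>S. \<Sum>l\<in>S. inner (P j *v x) (P l *v x))"
        unfolding y_def inner_sum_left inner_sum_right by (rule sum.swap)
      also have "\<dots> \<le> (\<Sum>j\<in>S. \<Sum>l\<in>S. (if (j, l) \<in> G then \<alpha> else 1) * (norm x)^2)"
        by (intro sum_mono bnd)
      also have "\<dots> = (\<Sum>p\<in>S \<times> S. (if p \<in> G then \<alpha> else 1)) * (norm x)^2"
        by (simp add: sum.cartesian_product sum_distrib_right)
      also have "(\<Sum>p\<in>S \<times> S. (if p \<in> G then \<alpha> else 1)) = (\<Sum>p\<in>S \<times> S. 1 - (1 - \<alpha>) * (if p \<in> G then 1 else 0))"
        by (intro sum.cong) auto
      also have "\<dots> = real N ^ 2 - (1 - \<alpha>) * real (card G)"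
        using GS finS cardS
        by (simp add: sum_subtractf sum_distrib_left[symmetric] sum.If_cases Int_absorb1 card_cartesian_product power2_eq_square
             Int_absorb2 flip: sum.inter_filter)
      finally have yy: "inner y y \<le> (real N ^ 2 - (1 - \<alpha>) * real (card G)) * (norm x)^2" .
      have "(1 - \<alpha>) * (\<delta> * real N ^ 2) \<le> (1 - \<alpha>) * real (card G)"
        using pairs alpha by (intro mult_left_mono) (simp_all add: G_def)
      then have "real N ^ 2 - (1 - \<alpha>) * real (card G) \<le> real N ^ 2 * (1 - t)"
        by (simp add: t_def algebra_simps)
      with yy have yy2: "inner y y \<le> real N ^ 2 * (1 - t) * (norm x)^2"
        by (smt (verit) mult_right_mono zero_le_power2)
      have Npos: "real N > 0" using False by simp
      have "norm ((1 / real N) *\<^sub>R y) ^ 2 = inner y y / real N ^ 2"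
      proof -
        have "norm y ^ 2 = inner y y" by (simp add: power2_norm_eq_inner)
        then show ?thesis by (simp add: power_mult_distrib power_divide)
      qed
      also have "\<dots> \<le> (1 - t) * (norm x)^2"
        using divide_right_mono[OF yy2, of "real N ^ 2"] Npos by simp
      also have "\<dots> \<le> ((1 - t / 2) * norm x) ^ 2"
      proof -
        have "1 - t \<le> (1 - t/2)^2" by (simp add: power2_eq_square algebra_simps)
        then show ?thesis by (simp add: power_mult_distrib mult_right_mono)
      qed
      finally have "norm ((1 / real N) *\<^sub>R y) \<le> (1 - t / 2) * norm x"
        by (rule power2_le_imp_le) (use t1 in simp)
      moreover have eq: "1 - \<delta> / 2 * (1 - \<alpha>) = 1 - t / 2" by (simp add: t_def)
      ultimately show ?thesis unfolding Ax eq by blast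
    qed
  qed
qed

end
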